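(* Let $\pi$ be a block-constructed permutation. Then $\pi$ is transposition Lagrangian.
   Context: Work on $\mathcal{A}=\{1,\dots,d\}$ with $\pi_0=\mathrm{id}$, so $\pi=(\mathrm{id},\pi_1)$ is identified with $\pi_1\in\mathfrak{S}_d$ (position of letter $k$ in the bottom row is $\pi_1(k)$). A permutation is block-constructed if $\pi_1(1)=d$, $\pi_1(d)=1$ (standard), and $\{2,\dots,d-1\}$ is partitioned into consecutive intervals $\{j,\dots,j+n-1\}$ with $n\in\{1,2,3,4,5\}$ on each of which $\pi_1$ reverses the order: $\pi_1(k)=2j+n-1-k$ for $j\le k\le j+n-1$. (These are exactly the standard permutations whose interior is a concatenation of the blocks $\begin{pmatrix}\alpha\\\alpha\end{pmatrix}$, $\begin{pmatrix}\alpha_1\alpha_2\dots\alpha_n\\\alpha_n\dots\alpha_1\end{pmatrix}$ for $n=2,\dots,5$; in particular they are self-inverse.) Define $\Omega=\Omega_\pi$ by $\Omega_{\alpha,\beta}=1$ if $\pi_0(\alpha)<\pi_0(\beta)$ and $\pi_1(\alpha)>\pi_1(\beta)$, $-1$ if $\pi_0(\alpha)>\pi_0(\beta)$ and $\pi_1(\alpha)<\pi_1(\beta)$, $0$ otherwise; $g(\pi)=\tfrac12\mathrm{rank}\,\Omega_\pi$ (the genus). Let $\pi_{\mathcal{A}}=\pi_0^{-1}\circ\pi_1$, $\mathbf{e}_{\mathcal{B}}=\sum_{\alpha\in\mathcal{B}}\mathbf{e}_\alpha$, $\mathbf{v}_{\mathcal{B}}=\Omega\mathbf{e}_{\mathcal{B}}$.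 A self-inverse $\pi$ is transposition Lagrangian if $\dim\mathrm{span}\{\mathbf{v}_{\mathcal{B}}:\mathcal{B}\text{ an orbit of }\pi_{\mathcal{A}},\#\mathcal{B}=2\}=\#\{\text{such orbits}\}=g(\pi)$. *)

theory Defs
  imports "Jordan_Normal_Form.DL_Rank" "HOL-Combinatorics.Orbits" "HOL-Combinatorics.Permutations"
begin

text \<open>Letters are \<open>{1..d}\<close>; a pair \<open>(pi0, pi1)\<close> of bijections \<open>{1..d} \<rightarrow> {1..d}\<close>
  (positions in the top / bottom row).  Matrices and vectors are the
  Jordan_Normal_Form ones over the reals, with row/column index \<open>i\<close> (0-based)
  corresponding to the letter \<open>i+1\<close>.\<close>

definition Omega_entry :: "(nat \<Rightarrow> nat) \<Rightarrow> (nat \<Rightarrow> nat) \<Rightarrow> nat \<Rightarrow> nat \<Rightarrow> real" where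
  "Omega_entry pi0 pi1 a b =
     (if pi0 a < pi0 b \<and> pi1 a > pi1 b then 1
      else if pi0 a > pi0 b \<and> pi1 a < pi1 b then -1 else 0)"

definition Omega_mat :: "nat \<Rightarrow> (nat \<Rightarrow> nat) \<Rightarrow> (nat \<Rightarrow> nat) \<Rightarrow> real mat" where
  "Omega_mat d pi0 pi1 = mat d d (\<lambda>(i, j). Omega_entry pi0 pi1 (i + 1) (j + 1))"

definition genus :: "nat \<Rightarrow> (nat \<Rightarrow> nat) \<Rightarrow> (nat \<Rightarrow> nat) \<Rightarrow> nat" where
  "genus d pi0 pi1 = vec_space.rank d (Omega_mat d pi0 pi1) div 2"

definition e_set :: "nat \<Rightarrow> nat set \<Rightarrow> real vec" where
  "e_set d B = vec d (\<lambda>i. if i + 1 \<in> B then 1 else 0)"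

definition v_set :: "nat \<Rightarrow> (nat \<Rightarrow> nat) \<Rightarrow> (nat \<Rightarrow> nat) \<Rightarrow> nat set \<Rightarrow> real vec" where
  "v_set d pi0 pi1 B = Omega_mat d pi0 pi1 *\<^sub>v e_set d B"

definition (in vec_space) span_dim :: "'a vec set \<Rightarrow> nat" where
  "span_dim S = vectorspace.dim class_ring (span_vs S)"

definition pi_A :: "nat \<Rightarrow> (nat \<Rightarrow> nat) \<Rightarrow> (nat \<Rightarrow> nat) \<Rightarrow> nat \<Rightarrow> nat" where
  "pi_A d pi0 pi1 = inv_into {1..d} pi0 \<circ> pi1"

definition two_orbits :: "nat \<Rightarrow> (nat \<Rightarrow> nat) \<Rightarrow> (nat \<Rightarrow> nat) \<Rightarrow> nat set set" where
  "two_orbits d pi0 pi1 =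
     {B. (\<exists>a\<in>{1..d}. B = orbit (pi_A d pi0 pi1) a) \<and> card B = 2}"

definition self_inverse :: "nat \<Rightarrow> (nat \<Rightarrow> nat) \<Rightarrow> (nat \<Rightarrow> nat) \<Rightarrow> bool" where
  "self_inverse d pi0 pi1 \<longleftrightarrow> (\<forall>a\<in>{1..d}. pi_A d pi0 pi1 (pi_A d pi0 pi1 a) = a)"

definition transposition_lagrangian :: "nat \<Rightarrow> (nat \<Rightarrow> nat) \<Rightarrow> (nat \<Rightarrow> nat) \<Rightarrow> bool" where
  "transposition_lagrangian d pi0 pi1 \<longleftrightarrow>
     self_inverse d pi0 pi1 \<and>
     vec_space.span_dim d (v_set d pi0 pi1 ` two_orbits d pi0 pi1)
       = card (two_orbits d pi0 pi1) \<and>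
     card (two_orbits d pi0 pi1) = genus d pi0 pi1"

fun blocks_ok :: "(nat \<Rightarrow> nat) \<Rightarrow> nat \<Rightarrow> nat list \<Rightarrow> bool" where
  "blocks_ok p j [] = True"
| "blocks_ok p j (n # ns) =
     (n \<in> {1..5} \<and> (\<forall>k\<in>{j..j + n - 1}. p k = 2 * j + n - 1 - k) \<and> blocks_ok p (j + n) ns)"

definition block_constructed :: "nat \<Rightarrow> (nat \<Rightarrow> nat) \<Rightarrow> bool" where
  "block_constructed d pi1 \<longleftrightarrow>
     pi1 permutes {1..d} \<and> pi1 1 = d \<and> pi1 d = 1 \<and>
     (\<exists>ns. {2..<2 + sum_list ns} = {2..d - 1} \<and> blocks_ok pi1 2 ns)"

end

theory Submission
  imports Defs
begin

lemma blocks_struct: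
  "blocks_ok p j ns \<Longrightarrow> \<exists>bs bl. \<forall>c\<in>{j..<j+sum_list ns}. j \<le> bs c \<and> bs c \<le> c \<and> c < bs c + bl c
     \<and> bs c + bl c \<le> j + sum_list ns \<and> bl c \<in> {1..5}
     \<and> (\<forall>k\<in>{bs c..<bs c+bl c}. bs k = bs c \<and> bl k = bl c \<and> p k = 2*bs c + bl c - 1 - k)"
proof (induction ns arbitrary: j)
  case Nil
  then show ?case by simp
next
  case (Cons n ns)
  from Cons.prems have n: "n \<in> {1..5}" and pk: "\<forall>k\<in>{j..j+n-1}. p k = 2*j+n-1-k"
    and r: "blocks_ok p (j+n) ns" by auto
  from Cons.IH[OF r] obtain bs bl where H: "\<forall>c\<in>{j+n..<j+n+sum_list ns}. j+n \<le> bs c \<and> bs c \<le> c \<and> c < bs c + bl c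
     \<and> bs c + bl c \<le> j+n + sum_list ns \<and> bl c \<in> {1..5}
     \<and> (\<forall>k\<in>{bs c..<bs c+bl c}. bs k = bs c \<and> bl k = bl c \<and> p k = 2*bs c + bl c - 1 - k)" by blast
  define bs' where "bs' c = (if c < j+n then j else bs c)" for c
  define bl' where "bl' c = (if c < j+n then n else bl c)" for c
  show ?case
  proof (intro exI ballI)
    fix c assume c: "c \<in> {j..<j + sum_list (n # ns)}"
    show "j \<le> bs' c \<and> bs' c \<le> c \<and> c < bs' c + bl' c
     \<and> bs' c + bl' c \<le> j + sum_list (n#ns) \<and> bl' c \<in> {1..5}
     \<and> (\<forall>k\<in>{bs' c..<bs' c+bl' c}. bs' k = bs' c \<and> bl' k = bl' c \<and> p k = 2*bs' c + bl' c - 1 - k)"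
    proof (cases "c < j+n")
      case True
      have bs: "bs' c = j" "bl' c = n" using True by (simp_all add: bs'_def bl'_def)
      have kk: "\<forall>k\<in>{j..<j+n}. bs' k = j \<and> bl' k = n \<and> p k = 2*j + n - 1 - k"
      proof
        fix k assume k: "k \<in> {j..<j+n}"
        then have "k \<in> {j..j+n-1}" by auto
        then show "bs' k = j \<and> bl' k = n \<and> p k = 2*j + n - 1 - k" using pk k by (simp add: bs'_def bl'_def)
      qed
      show ?thesis unfolding bs using c n True kk by simp
    next
      case False
      then have c2: "c \<in> {j+n..<j+n+sum_list ns}" using c by auto
      from H c2 have Hc: "j+n \<le> bs c \<and> bs c \<le> c \<and> c < bs c + bl c
     \<and> bs c + bl c \<le> j+n + sum_list ns \<and> bl c \<in> {1..5}
     \<and> (\<forall>k\<in>{bs c..<bs c+bl c}. bs k = bs c \<and> bl k = bl c \<and> p k = 2*bs c + bl c - 1 - k)" by blast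
      have h1: "j+n \<le> bs c" "bs c \<le> c" "c < bs c + bl c" "bs c + bl c \<le> j+n + sum_list ns" "bl c \<in> {1..5}"
        using Hc by blast+
      have bs: "bs' c = bs c" "bl' c = bl c" using False by (simp_all add: bs'_def bl'_def)
      have kk: "\<forall>k\<in>{bs c..<bs c+bl c}. bs' k = bs c \<and> bl' k = bl c \<and> p k = 2*bs c + bl c - 1 - k"
      proof
        fix k assume k: "k \<in> {bs c..<bs c+bl c}"
        then have "\<not> k < j+n" using h1 by auto
        moreover have "bs k = bs c \<and> bl k = bl c \<and> p k = 2*bs c + bl c - 1 - k" using Hc k by blast
        ultimately show "bs' k = bs c \<and> bl' k = bl c \<and> p k = 2*bs c + bl c - 1 - k" unfolding bs'_def bl'_def by simp
      qed
      show ?thesis unfolding bs using h1 kk by auto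
    qed
  qed
qed

definition sg :: "nat \<Rightarrow> nat \<Rightarrow> real" where
  "sg a b = (if a < b then 1 else if b < a then -1 else 0)"

lemma blk_kernel: fixes Y :: "nat \<Rightarrow> real"
  assumes n: "n \<in> {1..5}" and H: "\<forall>i<n. (\<Sum>k<n. sg i k * Y k) = 0"
    and M: "odd n \<longrightarrow> Y ((n-1) div 2) = 0"
  shows "\<forall>i<n. Y i = 0"
proof -
  have "n = 1 \<or> n = 2 \<or> n = 3 \<or> n = 4 \<or> n = 5" using n by auto
  then show ?thesis
  proof (elim disjE)
    assume n: "n = 1" then show ?thesis using M by simp
  next
    assume n: "n = 2" then show ?thesis using H by (simp add: numeral_eq_Suc less_Suc_eq sg_def)
  next
    assume n: "n = 3"
    have m: "Y 1 = 0" using M n by simp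
    show ?thesis using H m n by (simp add: numeral_eq_Suc less_Suc_eq sg_def)
  next
    assume n: "n = 4"
    have "(\<Sum>k<4. sg 0 k * Y k) = 0" "(\<Sum>k<4. sg 1 k * Y k) = 0" "(\<Sum>k<4. sg 2 k * Y k) = 0" "(\<Sum>k<4. sg 3 k * Y k) = 0"
      using H n by auto
    then have e: "Y 1 + Y 2 + Y 3 = 0" "- Y 0 + Y 2 + Y 3 = 0" "- Y 0 - Y 1 + Y 3 = 0" "- Y 0 - Y 1 - Y 2 = 0"
      by (simp_all add: numeral_eq_Suc sg_def)
    have "Y 0 = 0" "Y 1 = 0" "Y 2 = 0" "Y 3 = 0" using e by linarith+
    then show ?thesis using n by (auto simp: numeral_eq_Suc less_Suc_eq)
  next
    assume n: "n = 5"
    have m: "Y 2 = 0" using M n by simp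
    have "(\<Sum>k<5. sg 0 k * Y k) = 0" "(\<Sum>k<5. sg 1 k * Y k) = 0" "(\<Sum>k<5. sg 2 k * Y k) = 0" "(\<Sum>k<5. sg 3 k * Y k) = 0" "(\<Sum>k<5. sg 4 k * Y k) = 0"
      using H n by auto
    then have e: "Y 1 + Y 2 + Y 3 + Y 4 = 0" "- Y 0 + Y 2 + Y 3 + Y 4 = 0" "- Y 0 - Y 1 + Y 3 + Y 4 = 0" "- Y 0 - Y 1 - Y 2 + Y 4 = 0" "- Y 0 - Y 1 - Y 2 - Y 3 = 0"
      by (simp_all add: numeral_eq_Suc sg_def)
    have "Y 0 = 0" "Y 1 = 0" "Y 2 = 0" "Y 3 = 0" "Y 4 = 0" using e m by linarith+
    then show ?thesis using n by (auto simp: numeral_eq_Suc less_Suc_eq)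
  qed
qed

lemma blk_alt: assumes n: "n \<in> {1,3,5}" and i: "i < n"
  shows "(\<Sum>k<n. sg i k * (-1)^k) = (0::real)"
proof -
  have "n = 1 \<or> n = 3 \<or> n = 5" using n by auto
  then show ?thesis using i by (elim disjE) (auto simp add: numeral_eq_Suc less_Suc_eq sg_def)
qed

lemma alt_sum: assumes n: "n \<in> {1,3,5}"
  shows "(\<Sum>k<n. (-1)^k) = (1::real)"
proof -
  have "n = 1 \<or> n = 3 \<or> n = 5" using n by auto
  then show ?thesis by (elim disjE) (simp_all add: numeral_eq_Suc)
qed

locale BC =
  fixes d :: nat and p :: "nat \<Rightarrow> nat" and bs bl :: "nat \<Rightarrow> nat"
  assumes d1: "1 \<le> d"
  and perm: "p permutes {1..d}"
  and p1: "p 1 = d" and pd: "p d = 1"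
  and blk: "\<And>c. c \<in> {2..<d} \<Longrightarrow> 2 \<le> bs c \<and> bs c \<le> c \<and> c < bs c + bl c \<and> bs c + bl c \<le> d \<and> bl c \<in> {1..5}
      \<and> (\<forall>k\<in>{bs c..<bs c+bl c}. bs k = bs c \<and> bl k = bl c \<and> p k = 2*bs c + bl c - 1 - k)"
begin

lemma bsle: "c \<in> {2..<d} \<Longrightarrow> 2 \<le> bs c \<and> bs c \<le> c \<and> c < bs c + bl c \<and> bs c + bl c \<le> d \<and> 1 \<le> bl c \<and> bl c \<le> 5"
proof -
  assume c: "c \<in> {2..<d}"
  have "2 \<le> bs c \<and> bs c \<le> c \<and> c < bs c + bl c \<and> bs c + bl c \<le> d \<and> bl c \<in> {1..5}"
    using blk[OF c] by blast
  then show ?thesis by auto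
qed

lemma blk_k: "c \<in> {2..<d} \<Longrightarrow> k \<in> {bs c..<bs c + bl c} \<Longrightarrow> bs k = bs c \<and> bl k = bl c \<and> p k = 2*bs c + bl c - 1 - k"
proof -
  assume c: "c \<in> {2..<d}" and k: "k \<in> {bs c..<bs c + bl c}"
  have H: "\<forall>k\<in>{bs c..<bs c+bl c}. bs k = bs c \<and> bl k = bl c \<and> p k = 2*bs c + bl c - 1 - k"
    using blk[OF c] by (elim conjE) assumption
  show ?thesis using bspec[OF H k] .
qed

lemma p_in: "a \<in> {1..d} \<Longrightarrow> p a \<in> {1..d}"
  by (simp only: permutes_in_image[OF perm])

lemma p_inj: "inj p"
  using permutes_inj[OF perm] .

lemma p_int: "a \<in> {2..<d} \<Longrightarrow> p a = 2*bs a + bl a - 1 - a"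
proof -
  assume a: "a \<in> {2..<d}"
  have "a \<in> {bs a..<bs a + bl a}" using bsle[OF a] by simp
  from blk_k[OF a this] show ?thesis by blast
qed

lemma p_int_blk: "a \<in> {2..<d} \<Longrightarrow> p a \<in> {bs a..<bs a + bl a}"
proof -
  assume a: "a \<in> {2..<d}"
  have "2 \<le> bs a \<and> bs a \<le> a \<and> a < bs a + bl a \<and> bs a + bl a \<le> d \<and> 1 \<le> bl a \<and> bl a \<le> 5" using bsle[OF a] .
  then show ?thesis unfolding p_int[OF a] by auto
qed

lemma pp: "a \<in> {1..d} \<Longrightarrow> p (p a) = a"
proof -
  assume a: "a \<in> {1..d}"
  consider "a = 1" | "a = d" | "a \<in> {2..<d}" using a by fastforce
  then show ?thesis
  proof cases
    case 1 then show ?thesis using p1 pd by simp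
  next
    case 2 then show ?thesis using p1 pd by simp
  next
    case 3
    have "p (p a) = 2*bs a + bl a - 1 - p a" using blk_k[OF 3 p_int_blk[OF 3]] by blast
    then show ?thesis using p_int[OF 3] bsle[OF 3] by simp
  qed
qed

lemma same_block: "a \<in> {2..<d} \<Longrightarrow> b \<in> {bs a..<bs a+bl a} \<Longrightarrow> b \<in> {2..<d} \<and> bs b = bs a \<and> bl b = bl a"
proof -
  assume a: "a \<in> {2..<d}" and b: "b \<in> {bs a..<bs a+bl a}"
  have "2 \<le> bs a \<and> bs a \<le> a \<and> a < bs a + bl a \<and> bs a + bl a \<le> d \<and> 1 \<le> bl a \<and> bl a \<le> 5" using bsle[OF a] .
  then have "b \<in> {2..<d}" using b by auto
  moreover have "bs b = bs a \<and> bl b = bl a" using blk_k[OF a b] by blast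
  ultimately show ?thesis by blast
qed

lemma sep: assumes a: "a \<in> {2..<d}" and b: "b \<in> {2..<d}" and ab: "a < b" and nb: "b \<notin> {bs a..<bs a+bl a}"
  shows "bs a + bl a \<le> bs b"
proof (rule ccontr)
  assume H: "\<not> bs a + bl a \<le> bs b"
  have A: "2 \<le> bs a \<and> bs a \<le> a \<and> a < bs a + bl a \<and> bs a + bl a \<le> d \<and> 1 \<le> bl a \<and> bl a \<le> 5" using bsle[OF a] .
  have B: "2 \<le> bs b \<and> bs b \<le> b \<and> b < bs b + bl b \<and> bs b + bl b \<le> d \<and> 1 \<le> bl b \<and> bl b \<le> 5" using bsle[OF b] .
  show False
  proof (cases "bs a \<le> bs b")
    case True
    then have "bs b \<in> {bs a..<bs a+bl a}" using H by auto
    from same_block[OF a this] have 1: "bs (bs b) = bs a" "bl (bs b) = bl a" by auto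
    have "bs b \<in> {bs b..<bs b+bl b}" using B by auto
    from same_block[OF b this] have 2: "bs (bs b) = bs b" "bl (bs b) = bl b" by auto
    from 1 2 B nb show False by auto
  next
    case False
    then have "a \<in> {bs b..<bs b+bl b}" using A B ab by auto
    from same_block[OF b this] have "bs a = bs b" by auto
    with False show False by simp
  qed
qed

abbreviation om :: "nat \<Rightarrow> nat \<Rightarrow> real" where "om a b \<equiv> Omega_entry id p a b"

lemma om_1: "b \<in> {2..d} \<Longrightarrow> om 1 b = 1"
proof -
  assume b: "b \<in> {2..d}"
  then have "p b \<in> {1..d}" using p_in by auto
  moreover have "p b \<noteq> d"
  proof
    assume "p b = d" then have "p b = p 1" using p1 by simp
    then have "b = 1" using p_inj by (simp add: inj_eq)
    then show False using b by simp
  qed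
  ultimately show ?thesis using b p1 by (auto simp: Omega_entry_def)
qed

lemma om_d: "b \<in> {1..<d} \<Longrightarrow> om d b = -1"
proof -
  assume b: "b \<in> {1..<d}"
  then have "p b \<in> {1..d}" using p_in by auto
  moreover have "p b \<noteq> 1"
  proof
    assume "p b = 1" then have "p b = p d" using pd by simp
    then have "b = d" using p_inj by (simp add: inj_eq)
    then show False using b by simp
  qed
  ultimately show ?thesis using b pd by (auto simp: Omega_entry_def)
qed

lemma om_x1: "a \<in> {2..d} \<Longrightarrow> om a 1 = -1"
proof -
  assume b: "a \<in> {2..d}"
  then have "p a \<in> {1..d}" using p_in by auto
  moreover have "p a \<noteq> d"
  proof
    assume "p a = d" then have "p a = p 1" using p1 by simp
    then have "a = 1" using p_inj by (simp add: inj_eq)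
    then show False using b by simp
  qed
  ultimately show ?thesis using b p1 by (auto simp: Omega_entry_def)
qed

lemma om_xd: "a \<in> {1..<d} \<Longrightarrow> om a d = 1"
proof -
  assume b: "a \<in> {1..<d}"
  then have "p a \<in> {1..d}" using p_in by auto
  moreover have "p a \<noteq> 1"
  proof
    assume "p a = 1" then have "p a = p d" using pd by simp
    then have "a = d" using p_inj by (simp add: inj_eq)
    then show False using b by simp
  qed
  ultimately show ?thesis using b pd by (auto simp: Omega_entry_def)
qed

lemma om_diag: "om a a = 0"
  by (simp add: Omega_entry_def)

lemma om_same: "a \<in> {2..<d} \<Longrightarrow> b \<in> {bs a..<bs a+bl a} \<Longrightarrow> om a b = sg a b"
proof -
  assume a: "a \<in> {2..<d}" and b: "b \<in> {bs a..<bs a+bl a}"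
  have pa: "p a = 2*bs a + bl a - 1 - a" using p_int[OF a] .
  have pb: "p b = 2*bs a + bl a - 1 - b" using blk_k[OF a b] by blast
  have A: "2 \<le> bs a \<and> bs a \<le> a \<and> a < bs a + bl a \<and> bs a + bl a \<le> d \<and> 1 \<le> bl a \<and> bl a \<le> 5" using bsle[OF a] .
  show ?thesis using pa pb A b by (auto simp: Omega_entry_def sg_def)
qed

lemma om_diff: assumes a: "a \<in> {2..<d}" and b: "b \<in> {2..<d}" and nb: "b \<notin> {bs a..<bs a+bl a}"
  shows "om a b = 0"
proof -
  have A: "2 \<le> bs a \<and> bs a \<le> a \<and> a < bs a + bl a \<and> bs a + bl a \<le> d \<and> 1 \<le> bl a \<and> bl a \<le> 5" using bsle[OF a] .
  have B: "2 \<le> bs b \<and> bs b \<le> b \<and> b < bs b + bl b \<and> bs b + bl b \<le> d \<and> 1 \<le> bl b \<and> bl b \<le> 5" using bsle[OF b] .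
  have pa: "p a \<in> {bs a..<bs a + bl a}" using p_int_blk[OF a] .
  have pb: "p b \<in> {bs b..<bs b + bl b}" using p_int_blk[OF b] .
  have "a \<noteq> b" using A nb by auto
  then consider "a < b" | "b < a" by linarith
  then show ?thesis
  proof cases
    case 1
    have "bs a + bl a \<le> bs b" using sep[OF a b 1 nb] .
    then have "p a < p b" using pa pb by auto
    then show ?thesis using 1 by (auto simp: Omega_entry_def)
  next
    case 2
    have na: "a \<notin> {bs b..<bs b+bl b}"
    proof
      assume "a \<in> {bs b..<bs b+bl b}"
      from same_block[OF b this] have "bs a = bs b" "bl a = bl b" by auto
      then show False using nb B by auto
    qed
    have "bs b + bl b \<le> bs a" using sep[OF b a 2 na] .
    then have "p b < p a" using pa pb by auto
    then show ?thesis using 2 by (auto simp: Omega_entry_def)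
  qed
qed


definition rw :: "(nat \<Rightarrow> real) \<Rightarrow> nat \<Rightarrow> real" where
  "rw X a = (\<Sum>b\<in>{1..d}. om a b * X b)"

lemma rw_1: "rw X 1 = (\<Sum>b\<in>{2..d}. X b)"
proof -
  have e: "{1..d} = insert 1 {2..d}" using d1 by auto
  have "rw X 1 = om 1 1 * X 1 + (\<Sum>b\<in>{2..d}. om 1 b * X b)" unfolding rw_def e by simp
  also have "\<dots> = (\<Sum>b\<in>{2..d}. X b)" using om_1 by (simp add: om_diag)
  finally show ?thesis .
qed

lemma rw_d: "rw X d = - (\<Sum>b\<in>{1..<d}. X b)"
proof -
  have e: "{1..d} = insert d {1..<d}" using d1 by auto
  have "rw X d = om d d * X d + (\<Sum>b\<in>{1..<d}. om d b * X b)" unfolding rw_def e by simp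
  also have "\<dots> = - (\<Sum>b\<in>{1..<d}. X b)" using om_d by (simp add: om_diag sum_negf)
  finally show ?thesis .
qed

lemma rw_int: assumes a: "a \<in> {2..<d}"
  shows "rw X a = - X 1 + X d + (\<Sum>b\<in>{bs a..<bs a+bl a}. sg a b * X b)"
proof -
  have A: "2 \<le> bs a \<and> bs a \<le> a \<and> a < bs a + bl a \<and> bs a + bl a \<le> d \<and> 1 \<le> bl a \<and> bl a \<le> 5" using bsle[OF a] .
  have e: "{1..d} = insert 1 (insert d {2..<d})" using a by auto
  have "rw X a = om a 1 * X 1 + (om a d * X d + (\<Sum>b\<in>{2..<d}. om a b * X b))" unfolding rw_def e
    using a by simp
  also have "om a 1 = -1" using om_x1 a by simp
  also have "om a d = 1" using om_xd a by simp
  also have "(\<Sum>b\<in>{2..<d}. om a b * X b) = (\<Sum>b\<in>{bs a..<bs a+bl a}. om a b * X b)"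
    by (rule sum.mono_neutral_right) (use A om_diff[OF a] in auto)
  also have "\<dots> = (\<Sum>b\<in>{bs a..<bs a+bl a}. sg a b * X b)"
    using om_same[OF a] by simp
  finally show ?thesis by simp
qed

lemma ker: assumes R: "\<forall>a\<in>{1..d}. rw X a = 0" and F: "\<forall>a\<in>{1..d}. p a = a \<longrightarrow> X a = 0"
  shows "\<forall>a\<in>{1..d}. X a = 0"
proof (cases "d = 1")
  case True
  then show ?thesis using F p1 by auto
next
  case False
  then have d2: "2 \<le> d" using d1 by simp
  have "rw X 1 = 0" "rw X d = 0" using R d1 by auto
  then have s1: "(\<Sum>b\<in>{2..d}. X b) = 0" and sd: "(\<Sum>b\<in>{1..<d}. X b) = 0"
    using rw_1[of X] rw_d[of X] by auto
  have e1: "(\<Sum>b\<in>{2..d}. X b) = (\<Sum>b\<in>{2..<d}. X b) + X d"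
    using d2 by (simp add: atLeastLessThanSuc_atLeastAtMost[symmetric] del: atLeastLessThanSuc_atLeastAtMost)
  have e2: "(\<Sum>b\<in>{1..<d}. X b) = X 1 + (\<Sum>b\<in>{2..<d}. X b)"
    using d2 by (simp add: sum.atLeast_Suc_lessThan numeral_2_eq_2)
  have e3: "(\<Sum>b\<in>{1..d}. X b) = X 1 + (\<Sum>b\<in>{2..d}. X b)"
    using d2 by (simp add: sum.atLeast_Suc_atMost numeral_2_eq_2)
  have e4: "(\<Sum>b\<in>{1..d}. X b) = (\<Sum>b\<in>{1..<d}. X b) + X d"
    using d2 by (simp add: atLeastLessThanSuc_atLeastAtMost[symmetric] del: atLeastLessThanSuc_atLeastAtMost)
  have X1d: "X 1 = X d" using s1 sd e3 e4 by linarith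
  have intz: "\<forall>c\<in>{2..<d}. X c = 0"
  proof
    fix c assume c: "c \<in> {2..<d}"
    define j where "j = bs c"
    define n where "n = bl c"
    have A: "2 \<le> j \<and> j \<le> c \<and> c < j + n \<and> j + n \<le> d \<and> 1 \<le> n \<and> n \<le> 5" using bsle[OF c] j_def n_def by simp
    have eqs: "\<forall>i<n. (\<Sum>k<n. sg i k * X (j+k)) = 0"
    proof (intro allI impI)
      fix i assume i: "i < n"
      have a: "j+i \<in> {bs c..<bs c+bl c}" using i A j_def n_def by auto
      from same_block[OF c a] have ai: "j+i \<in> {2..<d}" and bsa: "bs (j+i) = j" "bl (j+i) = n"
        using j_def n_def by auto
      have "rw X (j+i) = 0" using R ai by auto
      then have "(\<Sum>b\<in>{j..<j+n}. sg (j+i) b * X b) = 0" using rw_int[OF ai] bsa X1d by simp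
      moreover have "(\<Sum>b\<in>{j..<j+n}. sg (j+i) b * X b) = (\<Sum>k<n. sg (j+i) (j+k) * X (j+k))"
        using sum.shift_bounds_nat_ivl[of "\<lambda>b. sg (j+i) b * X b" 0 j n] by (simp add: atLeast0LessThan add.commute)
      moreover have "(\<Sum>k<n. sg (j+i) (j+k) * X (j+k)) = (\<Sum>k<n. sg i k * X (j+k))"
        by (rule sum.cong) (auto simp add: sg_def)
      ultimately show "(\<Sum>k<n. sg i k * X (j+k)) = 0" by simp
    qed
    have mid: "odd n \<longrightarrow> X (j + (n-1) div 2) = 0"
    proof
      assume o: "odd n"
      have m: "j + (n-1) div 2 \<in> {bs c..<bs c + bl c}" using A unfolding j_def n_def by auto
      have P: "p (j + (n-1) div 2) = 2*j + n - 1 - (j + (n-1) div 2)"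
        using blk_k[OF c m] unfolding j_def n_def by blast
      have ev: "even (n - 1)" using o A by simp
      then have h: "2 * ((n-1) div 2) = n - 1" by simp
      have "2*j + n - 1 - (j + (n-1) div 2) = j + (n-1) div 2" using h A by linarith
      with P have "p (j + (n-1) div 2) = j + (n-1) div 2" by simp
      moreover have "j + (n-1) div 2 \<in> {1..d}" using A by auto
      ultimately show "X (j + (n-1) div 2) = 0" using F by blast
    qed
    have n15: "n \<in> {1..5}" using A by simp
    have Z: "\<forall>i<n. X (j+i) = 0" using blk_kernel[of n "\<lambda>k. X (j+k)", OF n15 eqs mid] .
    have "c - j < n" using A by auto
    with Z have "X (j + (c - j)) = 0" by blast
    moreover have "j + (c - j) = c" using A by auto
    ultimately show "X c = 0" by simp
  qed
  have "(\<Sum>b\<in>{2..<d}. X b) = 0" using intz by simp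
  then have z: "X d = 0" "X 1 = 0" using s1 e1 sd e2 by linarith+
  show ?thesis
  proof
    fix a assume a: "a \<in> {1..d}"
    then consider "a = 1" | "a = d" | "a \<in> {2..<d}" by fastforce
    then show "X a = 0" using z intz by cases auto
  qed
qed


lemma kvec: assumes a: "a \<in> {1..d}" and fa: "p a = a"
  shows "\<exists>Y. (\<forall>r\<in>{1..d}. rw Y r = 0) \<and> Y a = 1 \<and> (\<forall>b\<in>{1..d}. p b = b \<and> b \<noteq> a \<longrightarrow> Y b = 0)"
proof (cases "d = 1")
  case True
  define Y :: "nat \<Rightarrow> real" where "Y b = (if b = 1 then 1 else 0)" for b
  have e: "{1..d} = {1::nat}" using True by simp
  have a1: "a = 1" using a True by (simp only: atLeastAtMost_iff) linarith
  have "\<forall>r\<in>{1..d}. rw Y r = 0"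
  proof
    fix r assume r: "r \<in> {1..d}"
    then have r1: "r = 1" using True by (simp only: atLeastAtMost_iff) linarith
    have "rw Y r = om r 1 * Y 1" unfolding rw_def e by simp
    then show "rw Y r = 0" using r1 om_diag[of 1] by simp
  qed
  moreover have "Y a = 1" using a1 by (simp add: Y_def)
  moreover have "\<forall>b\<in>{1..d}. p b = b \<and> b \<noteq> a \<longrightarrow> Y b = 0"
  proof (intro ballI impI)
    fix b assume "b \<in> {1..d}" "p b = b \<and> b \<noteq> a"
    then have False using True a1 by (simp only: atLeastAtMost_iff) linarith
    then show "Y b = 0" ..
  qed
  ultimately show ?thesis by blast
next
  case False
  then have d2: "2 \<le> d" using d1 by simp
  have "a \<noteq> 1" using fa p1 d2 by auto
  moreover have "a \<noteq> d" using fa pd d2 by auto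
  ultimately have ai: "a \<in> {2..<d}" using a by auto
  define j where "j = bs a"
  define n where "n = bl a"
  have A: "2 \<le> j \<and> j \<le> a \<and> a < j + n \<and> j + n \<le> d \<and> 1 \<le> n \<and> n \<le> 5" using bsle[OF ai] j_def n_def by simp
  have pa: "p a = 2*j + n - 1 - a" using p_int[OF ai] j_def n_def by simp
  have aeq: "2*a = 2*j + n - 1" using pa fa A by linarith
  have nn: "n = 2*(a-j) + 1" using aeq A by linarith
  have k2: "a - j \<le> 2" using nn A by linarith
  have "a - j = 0 \<or> a - j = 1 \<or> a - j = 2" using k2 by linarith
  then have n135: "n \<in> {1,3,5}" using nn by auto
  define s :: real where "s = (-1)^(a-j)"
  have ss: "s * s = 1"
  proof -
    have "s * s = ((-1) * (-1::real))^(a-j)" unfolding s_def by (rule power_mult_distrib[symmetric])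
    then show ?thesis by simp
  qed
  define Y :: "nat \<Rightarrow> real" where
    "Y b = (if b = 1 \<or> b = d then -s else if b \<in> {j..<j+n} then s * (-1)^(b-j) else 0)" for b
  have Yblk: "b \<in> {j..<j+n} \<Longrightarrow> Y b = s * (-1)^(b-j)" for b using A by (auto simp: Y_def)
  have Y1: "Y 1 = -s" and Yd: "Y d = -s" by (auto simp: Y_def)
  have Ya: "Y a = 1" using Yblk[of a] A ss unfolding s_def by auto
  have bsum: "(\<Sum>b\<in>{j..<j+n}. Y b) = s"
  proof -
    have "(\<Sum>b\<in>{j..<j+n}. Y b) = (\<Sum>b\<in>{j..<j+n}. s * (-1)^(b-j))" using Yblk by simp
    also have "\<dots> = (\<Sum>k<n. s * (-1)^k)"
      using sum.shift_bounds_nat_ivl[of "\<lambda>b. s * (-1)^(b-j)" 0 j n] by (simp add: atLeast0LessThan add.commute)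
    also have "\<dots> = s * (\<Sum>k<n. (-1)^k)" by (simp add: sum_distrib_left)
    also have "\<dots> = s" using alt_sum[OF n135] by simp
    finally show ?thesis .
  qed
  have isum: "(\<Sum>b\<in>{2..<d}. Y b) = s"
  proof -
    have "(\<Sum>b\<in>{2..<d}. Y b) = (\<Sum>b\<in>{j..<j+n}. Y b)"
      by (rule sum.mono_neutral_right) (use A in \<open>auto simp: Y_def\<close>)
    then show ?thesis using bsum by simp
  qed
  have e1: "(\<Sum>b\<in>{2..d}. Y b) = (\<Sum>b\<in>{2..<d}. Y b) + Y d"
    using d2 by (simp add: atLeastLessThanSuc_atLeastAtMost[symmetric] del: atLeastLessThanSuc_atLeastAtMost)
  have e2: "(\<Sum>b\<in>{1..<d}. Y b) = Y 1 + (\<Sum>b\<in>{2..<d}. Y b)"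
    using d2 by (simp add: sum.atLeast_Suc_lessThan numeral_2_eq_2)
  have rows: "\<forall>r\<in>{1..d}. rw Y r = 0"
  proof
    fix r assume r: "r \<in> {1..d}"
    then consider "r = 1" | "r = d" | "r \<in> {2..<d}" by fastforce
    then show "rw Y r = 0"
    proof cases
      case 1 then show ?thesis using rw_1[of Y] e1 isum Yd by simp
    next
      case 2 then show ?thesis using rw_d[of Y] e2 isum Y1 by simp
    next
      case 3
      have R: "rw Y r = (\<Sum>b\<in>{bs r..<bs r+bl r}. sg r b * Y b)" using rw_int[OF 3] Y1 Yd by simp
      show ?thesis
      proof (cases "r \<in> {j..<j+n}")
        case True
        then have rb: "r \<in> {bs a..<bs a + bl a}" using j_def n_def by simp
        from same_block[OF ai rb] have "bs r = j" "bl r = n" using j_def n_def by auto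
        then have "rw Y r = (\<Sum>b\<in>{j..<j+n}. sg r b * Y b)" using R by simp
        also have "\<dots> = (\<Sum>b\<in>{j..<j+n}. sg r b * (s * (-1)^(b-j)))" using Yblk by simp
        also have "\<dots> = (\<Sum>k<n. sg r (j+k) * (s * (-1)^k))"
          using sum.shift_bounds_nat_ivl[of "\<lambda>b. sg r b * (s * (-1)^(b-j))" 0 j n] by (simp add: atLeast0LessThan add.commute)
        also have "\<dots> = s * (\<Sum>k<n. sg (r-j) k * (-1)^k)"
          unfolding sum_distrib_left by (rule sum.cong) (use True in \<open>auto simp: sg_def\<close>)
        also have "\<dots> = 0"
        proof -
          have "r - j < n" using True by auto
          then show ?thesis using blk_alt[OF n135, of "r-j"] by simp
        qed
        finally show ?thesis .
      next
        case False
        have "(\<Sum>b\<in>{bs r..<bs r+bl r}. sg r b * Y b) = 0"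
        proof (rule sum.neutral, rule ballI)
          fix b assume b: "b \<in> {bs r..<bs r+bl r}"
          from same_block[OF 3 b] have bi: "b \<in> {2..<d}" and bb: "bs b = bs r" "bl b = bl r" by auto
          have "b \<notin> {j..<j+n}"
          proof
            assume bj: "b \<in> {j..<j+n}"
            then have "b \<in> {bs a..<bs a + bl a}" using j_def n_def by simp
            from same_block[OF ai this] have "bs b = j" "bl b = n" using j_def n_def by auto
            moreover have "r \<in> {bs r..<bs r+bl r}" using bsle[OF 3] by simp
            ultimately show False using bb False by simp
          qed
          then have "Y b = 0" using bi by (auto simp: Y_def)
          then show "sg r b * Y b = 0" by simp
        qed
        then show ?thesis using R by simp
      qed
    qed
  qed
  have fix0: "\<forall>b\<in>{1..d}. p b = b \<and> b \<noteq> a \<longrightarrow> Y b = 0"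
  proof (intro ballI impI)
    fix b assume b: "b \<in> {1..d}" and fb: "p b = b \<and> b \<noteq> a"
    have "b \<noteq> 1" using fb p1 d2 by auto
    moreover have "b \<noteq> d" using fb pd d2 by auto
    moreover have "b \<notin> {j..<j+n}"
    proof
      assume bj: "b \<in> {j..<j+n}"
      then have "b \<in> {bs a..<bs a + bl a}" using j_def n_def by simp
      then have "p b = 2*j + n - 1 - b" using blk_k[OF ai] j_def n_def by blast
      then have "2*b = 2*a" using fb aeq bj A by linarith
      then show False using fb by simp
    qed
    ultimately show "Y b = 0" unfolding Y_def by auto
  qed
  show ?thesis using rows Ya fix0 by blast
qed


abbreviation OM where "OM \<equiv> Omega_mat d id p"

lemma OM_carrier: "OM \<in> carrier_mat d d" by (simp add: Omega_mat_def)

lemma mv: assumes x: "x \<in> carrier_vec d" and i: "i < d"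
  shows "(OM *\<^sub>v x) $ i = rw (\<lambda>b. x $ (b-1)) (i+1)"
proof -
  have "(OM *\<^sub>v x) $ i = (\<Sum>k\<in>{0..<d}. om (i+1) (k+1) * x $ k)"
    using x i by (simp add: Omega_mat_def scalar_prod_def)
  also have "\<dots> = (\<Sum>k<d. om (Suc i) (Suc k) * x $ (Suc k - 1))" by (simp add: atLeast0LessThan)
  also have "\<dots> = (\<Sum>b\<in>{1..d}. om (Suc i) b * x $ (b-1))" by (rule sum_bounds_lt_plus1)
  finally show ?thesis by (simp add: rw_def)
qed

lemma kerv: assumes x: "x \<in> carrier_vec d" and z: "OM *\<^sub>v x = 0\<^sub>v d"
  and F: "\<forall>a\<in>{1..d}. p a = a \<longrightarrow> x $ (a-1) = 0"
  shows "x = 0\<^sub>v d"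
proof -
  have R: "\<forall>a\<in>{1..d}. rw (\<lambda>b. x $ (b-1)) a = 0"
  proof
    fix a assume a: "a \<in> {1..d}"
    then have a1: "a - 1 < d" and a2: "a - 1 + 1 = a" by auto
    have "(OM *\<^sub>v x) $ (a-1) = 0" using z a1 by simp
    then show "rw (\<lambda>b. x $ (b-1)) a = 0" using mv[OF x a1] a2 by simp
  qed
  have Z: "\<forall>a\<in>{1..d}. x $ (a-1) = 0" using ker[OF R F] .
  show ?thesis
  proof (rule eq_vecI)
    show "dim_vec x = dim_vec (0\<^sub>v d)" using x by simp
    fix i assume "i < dim_vec (0\<^sub>v d)"
    then have i: "i < d" by simp
    then have "i + 1 \<in> {1..d}" by simp
    with Z have "x $ (i + 1 - 1) = 0" by blast
    then show "x $ i = 0\<^sub>v d $ i" using i by simp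
  qed
qed

lemma e_idx: "k < d \<Longrightarrow> e_set d B $ k = (if k+1 \<in> B then 1 else 0)"
  by (simp add: e_set_def)

lemma e_carrier: "e_set d B \<in> carrier_vec d"
  by (simp add: e_set_def)

lemma cv_idx: assumes b: "b \<in> {1..d}" and i: "i < d"
  shows "(OM *\<^sub>v e_set d {b}) $ i = om (i+1) b"
proof -
  have "(OM *\<^sub>v e_set d {b}) $ i = rw (\<lambda>c. e_set d {b} $ (c-1)) (i+1)" using mv[OF e_carrier i] .
  also have "\<dots> = (\<Sum>c\<in>{1..d}. if c = b then om (i+1) c else 0)"
    unfolding rw_def by (rule sum.cong) (auto simp: e_idx)
  also have "\<dots> = om (i+1) b" using b by (simp add: sum.delta)
  finally show ?thesis .
qed

end

sublocale BC \<subseteq> V: vec_space "TYPE(real)" d .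

context BC
begin


lemma indep:
  fixes I :: "'i set" and Bs :: "'i \<Rightarrow> nat set"
  assumes fin: "finite I" and ne: "\<forall>i\<in>I. Bs i \<noteq> {}"
    and sub: "\<forall>i\<in>I. Bs i \<subseteq> {a\<in>{1..d}. p a \<noteq> a}"
    and dj: "\<forall>i\<in>I. \<forall>i'\<in>I. i \<noteq> i' \<longrightarrow> Bs i \<inter> Bs i' = {}"
  shows "inj_on (\<lambda>i. OM *\<^sub>v e_set d (Bs i)) I" and "V.lin_indpt ((\<lambda>i. OM *\<^sub>v e_set d (Bs i)) ` I)"
proof -
  let ?f = "\<lambda>i. OM *\<^sub>v e_set d (Bs i)"
  have eF: "\<forall>a\<in>{1..d}. p a = a \<longrightarrow> e_set d (Bs i) $ (a-1) = 0" if i: "i \<in> I" for i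
  proof (intro ballI impI)
    fix a assume a: "a \<in> {1..d}" and fa: "p a = a"
    have "a \<notin> Bs i" using sub i fa by auto
    moreover have "a - 1 < d" "a - 1 + 1 = a" using a by auto
    ultimately show "e_set d (Bs i) $ (a-1) = 0" using e_idx[of "a-1" "Bs i"] by simp
  qed
  show inj: "inj_on ?f I"
  proof (rule inj_onI, rule ccontr)
    fix i i' assume i: "i \<in> I" and i': "i' \<in> I" and eq: "?f i = ?f i'" and ne': "i \<noteq> i'"
    define x where "x = e_set d (Bs i) - e_set d (Bs i')"
    have xc: "x \<in> carrier_vec d" unfolding x_def using e_carrier by simp
    have "OM *\<^sub>v x = ?f i - ?f i'" unfolding x_def
      by (rule mult_minus_distrib_mat_vec[OF OM_carrier e_carrier e_carrier])
    also have "\<dots> = 0\<^sub>v d" unfolding eq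
      by (rule minus_cancel_vec) (rule mult_mat_vec_carrier[OF OM_carrier e_carrier])
    finally have z: "OM *\<^sub>v x = 0\<^sub>v d" .
    have F: "\<forall>a\<in>{1..d}. p a = a \<longrightarrow> x $ (a-1) = 0"
    proof (intro ballI impI)
      fix a assume a: "a \<in> {1..d}" and fa: "p a = a"
      have "a - 1 < d" using a by auto
      then have "x $ (a-1) = e_set d (Bs i) $ (a-1) - e_set d (Bs i') $ (a-1)"
        unfolding x_def by (simp add: e_set_def)
      then show "x $ (a-1) = 0" using eF[OF i] eF[OF i'] a fa by simp
    qed
    have x0: "x = 0\<^sub>v d" using kerv[OF xc z F] .
    obtain b where b: "b \<in> Bs i" using ne i by blast
    have bd: "b \<in> {1..d}" using sub i b by auto
    have "b \<notin> Bs i'" using dj i i' ne' b by blast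
    moreover have "b - 1 < d" "Suc (b-1) = b" using bd by auto
    ultimately have "x $ (b-1) = 1" using b unfolding x_def by (simp add: e_set_def)
    moreover have "x $ (b-1) = 0" using x0 \<open>b - 1 < d\<close> by simp
    ultimately show False by simp
  qed
  show "V.lin_indpt (?f ` I)"
  proof
    assume "V.lin_dep (?f ` I)"
    then obtain A c v where A: "finite A" "A \<subseteq> ?f ` I" and lc: "V.lincomb c A = 0\<^sub>v d"
      and v: "v \<in> A" and cv: "c v \<noteq> 0"
      unfolding V.lin_dep_def by auto
    define g where "g = inv_into I ?f"
    have gw: "g w \<in> I \<and> ?f (g w) = w" if "w \<in> A" for w
    proof -
      have wi: "w \<in> ?f ` I" using A(2) that by blast
      have "g w \<in> I" unfolding g_def using inv_into_into[OF wi] .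
      moreover have "?f (g w) = w" unfolding g_def using f_inv_into_f[OF wi] .
      ultimately show ?thesis by blast
    qed
    have Ac: "A \<subseteq> carrier_vec d"
    proof
      fix w assume "w \<in> A"
      then have "?f (g w) = w" using gw by blast
      moreover have "?f (g w) \<in> carrier_vec d" using mult_mat_vec_carrier[OF OM_carrier e_carrier] .
      ultimately show "w \<in> carrier_vec d" by simp
    qed
    define x where "x = vec d (\<lambda>k. \<Sum>w\<in>A. c w * e_set d (Bs (g w)) $ k)"
    have xc: "x \<in> carrier_vec d" unfolding x_def by simp
    have "OM *\<^sub>v x = V.lincomb c A"
    proof (rule eq_vecI)
      have "V.lincomb c A \<in> carrier_vec d" using V.lincomb_closed Ac by auto
      then show "dim_vec (OM *\<^sub>v x) = dim_vec (V.lincomb c A)" by (simp add: Omega_mat_def)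
      fix i assume "i < dim_vec (V.lincomb c A)"
      then have i: "i < d" using \<open>V.lincomb c A \<in> carrier_vec d\<close> by simp
      have "(OM *\<^sub>v x) $ i = (\<Sum>k\<in>{0..<d}. OM $$ (i,k) * x $ k)"
        using i xc by (simp add: Omega_mat_def scalar_prod_def)
      also have "\<dots> = (\<Sum>k\<in>{0..<d}. \<Sum>w\<in>A. c w * (OM $$ (i,k) * e_set d (Bs (g w)) $ k))"
        unfolding x_def by (rule sum.cong) (auto simp: sum_distrib_left mult.left_commute)
      also have "\<dots> = (\<Sum>w\<in>A. c w * (\<Sum>k\<in>{0..<d}. OM $$ (i,k) * e_set d (Bs (g w)) $ k))"
        by (subst sum.swap) (simp add: sum_distrib_left)
      also have "\<dots> = (\<Sum>w\<in>A. c w * w $ i)"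
      proof (rule sum.cong)
        fix w assume w: "w \<in> A"
        have "(OM *\<^sub>v e_set d (Bs (g w))) $ i = (\<Sum>k\<in>{0..<d}. OM $$ (i,k) * e_set d (Bs (g w)) $ k)"
          using i by (simp add: Omega_mat_def scalar_prod_def e_set_def)
        then show "c w * (\<Sum>k\<in>{0..<d}. OM $$ (i,k) * e_set d (Bs (g w)) $ k) = c w * w $ i"
          using gw[OF w] by simp
      qed simp
      also have "\<dots> = V.lincomb c A $ i" using V.lincomb_index[OF i Ac] by simp
      finally show "(OM *\<^sub>v x) $ i = V.lincomb c A $ i" .
    qed
    then have z: "OM *\<^sub>v x = 0\<^sub>v d" using lc by simp
    have F: "\<forall>a\<in>{1..d}. p a = a \<longrightarrow> x $ (a-1) = 0"
    proof (intro ballI impI)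
      fix a assume a: "a \<in> {1..d}" and fa: "p a = a"
      have "\<forall>w\<in>A. e_set d (Bs (g w)) $ (a-1) = 0" using eF gw a fa by blast
      moreover have "a - 1 < d" using a by auto
      ultimately show "x $ (a-1) = 0" unfolding x_def by simp
    qed
    have x0: "x = 0\<^sub>v d" using kerv[OF xc z F] .
    obtain b where b: "b \<in> Bs (g v)" using ne gw[OF v] by blast
    have bd: "b \<in> {1..d}" using sub gw[OF v] b by auto
    have bd1: "b - 1 < d" using bd by auto
    have "x $ (b-1) = (\<Sum>w\<in>A. if w = v then c w else 0)"
      unfolding x_def using bd1
    proof (simp, intro sum.cong refl)
      fix w assume w: "w \<in> A"
      show "c w * e_set d (Bs (g w)) $ (b - Suc 0) = (if w = v then c w else 0)"
      proof (cases "w = v")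
        case True
        have "Suc (b - 1) = b" using bd by auto
        then show ?thesis using True b bd1 by (simp add: e_set_def)
      next
        case False
        have "g w \<noteq> g v" using gw[OF w] gw[OF v] False by metis
        then have "b \<notin> Bs (g w)" using dj gw[OF w] gw[OF v] b by blast
        moreover have "Suc (b - 1) = b" using bd by auto
        ultimately show ?thesis using False bd1 by (simp add: e_set_def)
      qed
    qed
    also have "\<dots> = c v" using v A(1) by (simp add: sum.delta)
    finally have "x $ (b-1) = c v" .
    moreover have "b - 1 < d" using bd by auto
    ultimately show False using x0 cv by simp
  qed
qed


abbreviation Kset where "Kset \<equiv> {a\<in>{1..d}. p a \<noteq> a}"
abbreviation cv where "cv b \<equiv> OM *\<^sub>v e_set d {b}"

lemma dim_indpt: assumes U: "U \<subseteq> carrier_vec d" "finite U" "V.lin_indpt U"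
  shows "vectorspace.dim class_ring (V.span_vs U) = card U"
proof -
  have "maximal U (\<lambda>T. T \<subseteq> U \<and> V.lin_indpt T)" unfolding maximal_def using U by auto
  from V.dim_span[OF U(1) U(2) this] show ?thesis .
qed

lemma rank_OM: "vec_space.rank d OM = card Kset"
proof -
  let ?U = "cv ` Kset"
  have finK: "finite Kset" by simp
  have inj: "inj_on cv Kset" and li: "V.lin_indpt ?U"
    using indep[of Kset "\<lambda>b. {b}"] by auto
  have Uc: "?U \<subseteq> carrier_vec d" using mult_mat_vec_carrier[OF OM_carrier e_carrier] by auto
  have cols: "set (cols OM) = cv ` {1..d}"
  proof -
    have "col OM j = cv (j+1)" if j: "j < d" for j
    proof (rule eq_vecI)
      show "dim_vec (col OM j) = dim_vec (cv (j+1))" by (simp add: Omega_mat_def)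
      fix i assume "i < dim_vec (cv (j+1))"
      then have i: "i < d" by (simp add: Omega_mat_def)
      have "cv (j+1) $ i = om (i+1) (j+1)" using cv_idx[of "j+1" i] i j by simp
      then show "col OM j $ i = cv (j+1) $ i" using i j by (simp add: Omega_mat_def)
    qed
    then have "set (cols OM) = (\<lambda>j. cv (j+1)) ` {0..<d}" unfolding cols_def by (simp add: Omega_mat_def)
    also have "\<dots> = cv ` ((\<lambda>j. j+1) ` {0..<d})" by (simp only: image_image)
    also have "(\<lambda>j. j+1) ` {0..<d} = {1..d}"
    proof
      show "(\<lambda>j. j+1) ` {0..<d} \<subseteq> {1..d}" by auto
      show "{1..d} \<subseteq> (\<lambda>j. j+1) ` {0..<d}"
      proof
        fix b assume "b \<in> {1..d}"
        then have "b = (b-1)+1" "b - 1 \<in> {0..<d}" by auto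
        then show "b \<in> (\<lambda>j. j+1) ` {0..<d}" by blast
      qed
    qed
    finally show ?thesis .
  qed
  have inspan: "cv a \<in> V.span ?U" if a: "a \<in> {1..d}" and fa: "p a = a" for a
  proof -
    obtain Y where R: "\<forall>r\<in>{1..d}. rw Y r = 0" and Ya: "Y a = 1"
      and Yf: "\<forall>b\<in>{1..d}. p b = b \<and> b \<noteq> a \<longrightarrow> Y b = 0"
      using kvec[OF a fa] by blast
    define c where "c w = - Y (inv_into Kset cv w)" for w
    have "V.lincomb c ?U = cv a"
    proof (rule eq_vecI)
      have lc: "V.lincomb c ?U \<in> carrier_vec d" using V.lincomb_closed Uc by auto
      then show "dim_vec (V.lincomb c ?U) = dim_vec (cv a)" by (simp add: Omega_mat_def)
      fix i assume "i < dim_vec (cv a)"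
      then have i: "i < d" by (simp add: Omega_mat_def)
      have "V.lincomb c ?U $ i = (\<Sum>w\<in>?U. c w * w $ i)" using V.lincomb_index[OF i Uc] .
      also have "\<dots> = (\<Sum>b\<in>Kset. c (cv b) * cv b $ i)" using sum.reindex[OF inj] by simp
      also have "\<dots> = (\<Sum>b\<in>Kset. - (om (i+1) b * Y b))"
      proof (rule sum.cong)
        fix b assume b: "b \<in> Kset"
        have "inv_into Kset cv (cv b) = b" using inv_into_f_f[OF inj b] .
        then show "c (cv b) * cv b $ i = - (om (i+1) b * Y b)" using cv_idx[of b i] b i by (simp add: c_def)
      qed simp
      also have "\<dots> = om (i+1) a"
      proof -
        let ?F = "{b\<in>{1..d}. p b = b}"
        have un: "{1..d} = Kset \<union> ?F" by auto
        have "rw Y (i+1) = 0" using R i by simp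
        then have "(\<Sum>b\<in>Kset \<union> ?F. om (i+1) b * Y b) = 0" unfolding rw_def un[symmetric] .
        then have "(\<Sum>b\<in>Kset. om (i+1) b * Y b) + (\<Sum>b\<in>?F. om (i+1) b * Y b) = 0"
          by (subst (asm) sum.union_disjoint) auto
        moreover have "(\<Sum>b\<in>?F. om (i+1) b * Y b) = (\<Sum>b\<in>?F. if b = a then om (i+1) b else 0)"
          by (rule sum.cong) (use Ya Yf in auto)
        moreover have "(\<Sum>b\<in>?F. if b = a then om (i+1) b else 0) = om (i+1) a"
          using a fa by (simp add: sum.delta)
        ultimately show ?thesis by (simp add: sum_negf)
      qed
      also have "\<dots> = cv a $ i" using cv_idx[OF a i] by simp
      finally show "V.lincomb c ?U $ i = cv a $ i" .
    qed
    then have "\<exists>c' A. cv a = V.lincomb c' A \<and> finite A \<and> A \<subseteq> ?U"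
      using finite_imageI[OF finK, of cv] by (intro exI[of _ c] exI[of _ ?U]) simp
    then show ?thesis unfolding V.span_def by auto
  qed
  have sub1: "set (cols OM) \<subseteq> V.span ?U"
  proof
    fix w assume "w \<in> set (cols OM)"
    then obtain b where b: "b \<in> {1..d}" and w: "w = cv b" using cols by blast
    show "w \<in> V.span ?U"
    proof (cases "p b = b")
      case True then show ?thesis using inspan b w by blast
    next
      case False
      then have "w \<in> ?U" using b w by blast
      then show ?thesis using V.in_own_span[OF Uc] by blast
    qed
  qed
  have "V.span (set (cols OM)) \<subseteq> V.span ?U"
    using V.span_is_subset[OF sub1 V.span_is_submodule[OF Uc]] .
  moreover have "V.span ?U \<subseteq> V.span (set (cols OM))"
    by (rule V.span_is_monotone) (use cols in auto)
  ultimately have eq: "V.span (set (cols OM)) = V.span ?U" by blast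
  have "vec_space.rank d OM = vectorspace.dim class_ring (V.span_vs ?U)"
    unfolding V.rank_def eq ..
  also have "\<dots> = card ?U" using dim_indpt[OF Uc _ li] by simp
  also have "\<dots> = card Kset" using card_image[OF inj] .
  finally show ?thesis .
qed


lemma piA: "a \<in> {1..d} \<Longrightarrow> pi_A d id p a = p a"
proof -
  assume a: "a \<in> {1..d}"
  have "p a \<in> {1..d}" using p_in[OF a] .
  then have "inv_into {1..d} id (id (p a)) = p a" by (rule inv_into_f_f[rotated]) simp
  then show ?thesis unfolding pi_A_def by simp
qed

lemma orb: assumes a: "a \<in> {1..d}" shows "orbit (pi_A d id p) a = {a, p a}"
proof
  let ?q = "pi_A d id p"
  have pa: "p a \<in> {1..d}" using p_in[OF a] .
  have qa: "?q a = p a" using piA[OF a] .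
  have qpa: "?q (p a) = a" using piA[OF pa] pp[OF a] by simp
  show "orbit ?q a \<subseteq> {a, p a}"
  proof
    fix y assume "y \<in> orbit ?q a"
    then show "y \<in> {a, p a}"
    proof (induction rule: orbit.induct)
      case base then show ?case using qa by simp
    next
      case (step y) then show ?case using qa qpa by auto
    qed
  qed
  have "p a \<in> orbit ?q a" using orbit.base[of ?q a] qa by simp
  moreover have "a \<in> orbit ?q a" using orbit.step[OF orbit.base[of ?q a]] qa qpa by simp
  ultimately show "{a, p a} \<subseteq> orbit ?q a" by blast
qed

lemma two_orb: "two_orbits d id p = (\<lambda>a. {a, p a}) ` Kset"
proof
  show "two_orbits d id p \<subseteq> (\<lambda>a. {a, p a}) ` Kset"
  proof
    fix B assume "B \<in> two_orbits d id p"
    then obtain a where a: "a \<in> {1..d}" and B: "B = orbit (pi_A d id p) a" and c: "card B = 2"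
      unfolding two_orbits_def by blast
    have B': "B = {a, p a}" using B orb[OF a] by simp
    then have "p a \<noteq> a" using c by auto
    then show "B \<in> (\<lambda>a. {a, p a}) ` Kset" using a B' by blast
  qed
  show "(\<lambda>a. {a, p a}) ` Kset \<subseteq> two_orbits d id p"
  proof
    fix B assume "B \<in> (\<lambda>a. {a, p a}) ` Kset"
    then obtain a where a: "a \<in> {1..d}" "p a \<noteq> a" and B: "B = {a, p a}" by blast
    have "B = orbit (pi_A d id p) a" using B orb[OF a(1)] by simp
    moreover have "card B = 2" using B a(2) by auto
    ultimately show "B \<in> two_orbits d id p" unfolding two_orbits_def using a(1) by blast
  qed
qed

lemma pair_eq: assumes a: "a \<in> {1..d}" and x: "x \<in> {a, p a}" shows "{a, p a} = {x, p x}"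
proof (cases "x = a")
  case True then show ?thesis by simp
next
  case False
  then have x: "x = p a" using x by simp
  have "{x, p x} = {p a, a}" unfolding x pp[OF a] ..
  then show ?thesis by (simp add: insert_commute)
qed

lemma T_props:
  shows "finite (two_orbits d id p)"
    and "\<forall>B\<in>two_orbits d id p. B \<noteq> {} \<and> B \<subseteq> Kset"
    and "\<forall>B\<in>two_orbits d id p. \<forall>B'\<in>two_orbits d id p. B \<noteq> B' \<longrightarrow> B \<inter> B' = {}"
    and "\<Union>(two_orbits d id p) = Kset"
    and "\<forall>B\<in>two_orbits d id p. card B = 2"
proof -
  show "finite (two_orbits d id p)" unfolding two_orb by simp
  show "\<forall>B\<in>two_orbits d id p. B \<noteq> {} \<and> B \<subseteq> Kset"
  proof
    fix B assume "B \<in> two_orbits d id p"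
    then obtain a where a: "a \<in> {1..d}" "p a \<noteq> a" and B: "B = {a, p a}" unfolding two_orb by blast
    have "p a \<in> {1..d}" "p (p a) \<noteq> p a" using p_in[OF a(1)] pp[OF a(1)] a(2) by auto
    then show "B \<noteq> {} \<and> B \<subseteq> Kset" using a B by auto
  qed
  show "\<forall>B\<in>two_orbits d id p. \<forall>B'\<in>two_orbits d id p. B \<noteq> B' \<longrightarrow> B \<inter> B' = {}"
  proof (intro ballI impI)
    fix B B' assume "B \<in> two_orbits d id p" "B' \<in> two_orbits d id p" and ne: "B \<noteq> B'"
    then obtain a b where a: "a \<in> {1..d}" and B: "B = {a, p a}" and b: "b \<in> {1..d}" and B': "B' = {b, p b}"
      unfolding two_orb by blast
    show "B \<inter> B' = {}"
    proof (rule ccontr)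
      assume "B \<inter> B' \<noteq> {}"
      then obtain x where x1: "x \<in> {a, p a}" and x2: "x \<in> {b, p b}" using B B' by blast
      have "B = {x, p x}" using B pair_eq[OF a x1] by simp
      moreover have "B' = {x, p x}" using B' pair_eq[OF b x2] by simp
      ultimately have "B = B'" by simp
      then show False using ne by simp
    qed
  qed
  show "\<Union>(two_orbits d id p) = Kset"
  proof
    show "\<Union>(two_orbits d id p) \<subseteq> Kset"
    proof
      fix x assume "x \<in> \<Union>(two_orbits d id p)"
      then obtain a where a: "a \<in> {1..d}" "p a \<noteq> a" and x: "x \<in> {a, p a}" unfolding two_orb by blast
      have "p a \<in> {1..d}" "p (p a) \<noteq> p a" using p_in[OF a(1)] pp[OF a(1)] a(2) by auto
      then show "x \<in> Kset" using a x by auto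
    qed
    show "Kset \<subseteq> \<Union>(two_orbits d id p)" unfolding two_orb by blast
  qed
  show "\<forall>B\<in>two_orbits d id p. card B = 2" unfolding two_orb by auto
qed

lemma card_K: "card Kset = 2 * card (two_orbits d id p)"
proof -
  have "2 * card (two_orbits d id p) = card (\<Union>(two_orbits d id p))"
    by (rule card_partition) (use T_props in auto)
  then show ?thesis using T_props(4) by simp
qed

lemma final: "transposition_lagrangian d id p"
proof -
  let ?T = "two_orbits d id p"
  have si: "self_inverse d id p" unfolding self_inverse_def
  proof
    fix a assume a: "a \<in> {1..d}"
    have "pi_A d id p (pi_A d id p a) = pi_A d id p (p a)" using piA[OF a] by simp
    also have "\<dots> = p (p a)" using piA[OF p_in[OF a]] .
    also have "\<dots> = a" using pp[OF a] .
    finally show "pi_A d id p (pi_A d id p a) = a" .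
  qed
  have ne: "\<forall>B\<in>?T. id B \<noteq> {}" using T_props(2) by simp
  have sub: "\<forall>B\<in>?T. id B \<subseteq> Kset" using T_props(2) by simp
  have dj: "\<forall>B\<in>?T. \<forall>B'\<in>?T. B \<noteq> B' \<longrightarrow> id B \<inter> id B' = {}" using T_props(3) by simp
  note ind = indep[OF T_props(1) ne sub dj]
  have vs: "v_set d id p ` ?T = (\<lambda>B. OM *\<^sub>v e_set d (id B)) ` ?T" unfolding v_set_def by simp
  have Uc: "v_set d id p ` ?T \<subseteq> carrier_vec d"
    using mult_mat_vec_carrier[OF OM_carrier e_carrier] unfolding v_set_def by auto
  have li: "V.lin_indpt (v_set d id p ` ?T)" unfolding vs by (rule ind(2))
  have fin: "finite (v_set d id p ` ?T)" using T_props(1) by simp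
  have "vec_space.span_dim d (v_set d id p ` ?T) = card (v_set d id p ` ?T)"
    unfolding V.span_dim_def by (rule dim_indpt[OF Uc fin li])
  also have "\<dots> = card ?T" unfolding vs using card_image[OF ind(1)] .
  finally have sd: "vec_space.span_dim d (v_set d id p ` ?T) = card ?T" .
  have g: "genus d id p = card ?T" unfolding genus_def rank_OM card_K by simp
  show ?thesis unfolding transposition_lagrangian_def using si sd g by simp
qed

end

theorem mainTheorem11:
  fixes d :: nat and pi1 :: "nat \<Rightarrow> nat"
  assumes "block_constructed d pi1"
  shows "transposition_lagrangian d id pi1"
proof -
  from assms have perm: "pi1 permutes {1..d}" and p1: "pi1 1 = d" and pd: "pi1 d = 1"
    and ex: "\<exists>ns. {2..<2 + sum_list ns} = {2..d - 1} \<and> blocks_ok pi1 2 ns"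
    unfolding block_constructed_def by auto
  from ex obtain ns where eq: "{2..<2 + sum_list ns} = {2..d - 1}" and bo: "blocks_ok pi1 2 ns" by blast
  have d1: "1 \<le> d"
  proof (rule ccontr)
    assume "\<not> 1 \<le> d"
    then have "d = 0" by simp
    then have "pi1 = id" using perm by (simp add: permutes_empty)
    then show False using p1 \<open>d = 0\<close> by simp
  qed
  obtain bs bl where H: "\<forall>c\<in>{2..<2+sum_list ns}. 2 \<le> bs c \<and> bs c \<le> c \<and> c < bs c + bl c
     \<and> bs c + bl c \<le> 2 + sum_list ns \<and> bl c \<in> {1..5}
     \<and> (\<forall>k\<in>{bs c..<bs c+bl c}. bs k = bs c \<and> bl k = bl c \<and> pi1 k = 2*bs c + bl c - 1 - k)"
    using blocks_struct[OF bo] by blast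
  have inr: "c \<in> {2..<2+sum_list ns}" and bnd: "2 + sum_list ns \<le> d" if c: "c \<in> {2..<d}" for c
  proof -
    have "{2..d - 1} = {2..<d}" using c by auto
    then have eq2: "{2..<2 + sum_list ns} = {2..<d}" using eq by simp
    show "c \<in> {2..<2+sum_list ns}" using c eq2 by simp
    show "2 + sum_list ns \<le> d"
    proof (cases "sum_list ns = 0")
      case True
      have "2 \<le> d" using c by simp
      then show ?thesis unfolding True by simp
    next
      case False
      then have "1 + sum_list ns \<in> {2..<2 + sum_list ns}" by (simp only: atLeastLessThan_iff) linarith
      then have "1 + sum_list ns \<in> {2..<d}" unfolding eq2 .
      then show ?thesis by simp
    qed
  qed
  interpret B: BC d pi1 bs bl
  proof
    show "1 \<le> d" by (rule d1)
    show "pi1 permutes {1..d}" by (rule perm)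
    show "pi1 1 = d" by (rule p1)
    show "pi1 d = 1" by (rule pd)
    fix c assume c: "c \<in> {2..<d}"
    have Hc: "2 \<le> bs c \<and> bs c \<le> c \<and> c < bs c + bl c
     \<and> bs c + bl c \<le> 2 + sum_list ns \<and> bl c \<in> {1..5}
     \<and> (\<forall>k\<in>{bs c..<bs c+bl c}. bs k = bs c \<and> bl k = bl c \<and> pi1 k = 2*bs c + bl c - 1 - k)"
      using H inr[OF c] by blast
    have b: "2 + sum_list ns \<le> d" using bnd[OF c] .
    show "2 \<le> bs c \<and> bs c \<le> c \<and> c < bs c + bl c \<and> bs c + bl c \<le> d \<and> bl c \<in> {1..5}
      \<and> (\<forall>k\<in>{bs c..<bs c+bl c}. bs k = bs c \<and> bl k = bl c \<and> pi1 k = 2*bs c + bl c - 1 - k)"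
    proof (intro conjI)
      show "bs c + bl c \<le> d" using Hc b by linarith
    qed (use Hc in blast)+
  qed
  show ?thesis by (rule B.final)
qed

end
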